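(* Let $a\in[0,\infty)$ and let $t:[0,1]\to[0,\infty]$ and $s:[0,\infty]\to[0,1]$ be continuous and increasing functions such that $G_{t,s}(x,y)=s(t(x)+t(y))$ defines a grouping function $G_{t,s}:[0,1]^2\to[0,1]$, and suppose that at least one of the following holds: (1) $t(x)=\frac{a}{2}$ if and only if $x=0$; (2) $s(x)=0$ if and only if $x\in[0,a]$. Then there exist a pseudo automorphism $\mathcal{F}$ and a t-superconorm $T_{super}$ such that $G_{t,s}(x,y)=\mathcal{F}(T_{super}(x,y))$ for all $x,y\in[0,1]$.
   Context: "Increasing" means non-decreasing. Arithmetic in $[0,\infty]$ uses $c+\infty=\infty$; continuity on $[0,\infty]$ refers to the usual topology of the extended half-line. A grouping function is a map $G:[0,1]^2\to[0,1]$ that is (G1) commutative, (G2) $G(x,y)=0$ iff $x=y=0$, (G3) $G(x,y)=1$ iff $x=1$ or $y=1$, (G4) increasing in each variable, (G5) continuous. A pseudo automorphism is a continuous increasing map $\mathcal{F}:[0,1]\to[0,1]$ with $\mathcal{F}(x)=1$ iff $x=1$ and $\mathcal{F}(x)=0$ iff $x=0$. A t-superconorm is a commutative, associative map $S:[0,1]^2\to[0,1]$, increasing in each variable, with $S(x,y)\ge\max\{x,y\}$ for all $x,y$. *)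

theory Defs
  imports "HOL-Analysis.Analysis" "HOL-Library.Extended_Nonnegative_Real"
begin

definition grouping_function :: "(real \<Rightarrow> real \<Rightarrow> real) \<Rightarrow> bool" where
  "grouping_function G \<longleftrightarrow>
     (\<forall>x\<in>{0..1}. \<forall>y\<in>{0..1}. G x y \<in> {0..1}) \<and>
     (\<forall>x\<in>{0..1}. \<forall>y\<in>{0..1}. G x y = G y x) \<and>
     (\<forall>x\<in>{0..1}. \<forall>y\<in>{0..1}. G x y = 0 \<longleftrightarrow> x = 0 \<and> y = 0) \<and>
     (\<forall>x\<in>{0..1}. \<forall>y\<in>{0..1}. G x y = 1 \<longleftrightarrow> x = 1 \<or> y = 1) \<and>
     (\<forall>x\<in>{0..1}. \<forall>x'\<in>{0..1}. \<forall>y\<in>{0..1}. x \<le> x' \<longrightarrow> G x y \<le> G x' y) \<and>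
     (\<forall>x\<in>{0..1}. \<forall>y\<in>{0..1}. \<forall>y'\<in>{0..1}. y \<le> y' \<longrightarrow> G x y \<le> G x y') \<and>
     continuous_on ({0..1} \<times> {0..1}) (\<lambda>(x, y). G x y)"

definition pseudo_automorphism :: "(real \<Rightarrow> real) \<Rightarrow> bool" where
  "pseudo_automorphism F \<longleftrightarrow>
     F ` {0..1} \<subseteq> {0..1} \<and>
     continuous_on {0..1} F \<and> mono_on {0..1} F \<and>
     (\<forall>x\<in>{0..1}. F x = 1 \<longleftrightarrow> x = 1) \<and>
     (\<forall>x\<in>{0..1}. F x = 0 \<longleftrightarrow> x = 0)"

definition t_superconorm :: "(real \<Rightarrow> real \<Rightarrow> real) \<Rightarrow> bool" where
  "t_superconorm S \<longleftrightarrow>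
     (\<forall>x\<in>{0..1}. \<forall>y\<in>{0..1}. S x y \<in> {0..1}) \<and>
     (\<forall>x\<in>{0..1}. \<forall>y\<in>{0..1}. S x y = S y x) \<and>
     (\<forall>x\<in>{0..1}. \<forall>y\<in>{0..1}. \<forall>z\<in>{0..1}. S (S x y) z = S x (S y z)) \<and>
     (\<forall>x\<in>{0..1}. \<forall>x'\<in>{0..1}. \<forall>y\<in>{0..1}. x \<le> x' \<longrightarrow> S x y \<le> S x' y) \<and>
     (\<forall>x\<in>{0..1}. \<forall>y\<in>{0..1}. \<forall>y'\<in>{0..1}. y \<le> y' \<longrightarrow> S x y \<le> S x y') \<and>
     (\<forall>x\<in>{0..1}. \<forall>y\<in>{0..1}. max x y \<le> S x y)"

end

theory Submission
  imports Defs
begin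

lemma min_add_ennreal: "min (a::ennreal) b + c = min (a+c) (b+c)"
  by (cases "a \<le> b") (auto simp: min_def add_right_mono)

lemma assoc_aux:
  fixes A P K c z :: ennreal
  assumes "A + c = min P (K + c)" "c \<le> z"
  shows "min (A + z) (K + c) + c = min (P + z) (K + c + c)"
proof -
  have "min (A + z) (K + c) + c = min (A + c + z) (K + c + c)"
    unfolding min_add_ennreal by (simp only: add.assoc add.commute[of z c])
  also have "\<dots> = min (min (P + z) (K + c + z)) (K + c + c)"
    using assms(1) by (simp add: min_add_ennreal)
  also have "\<dots> = min (P + z) (K + c + c)"
    using add_left_mono[OF assms(2), of "K + c"]
    by (simp add: min.assoc min.absorb2)
  finally show ?thesis .
qed

theorem proposition6p7:
  fixes a :: real and t :: "real \<Rightarrow> ennreal" and s :: "ennreal \<Rightarrow> real"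
  assumes a: "0 \<le> a"
    and t_cont: "continuous_on {0..1} t" and t_mono: "mono_on {0..1} t"
    and s_cont: "continuous_on UNIV s" and s_mono: "mono s"
    and s_range: "\<forall>u. s u \<in> {0..1}"
    and G: "grouping_function (\<lambda>x y. s (t x + t y))"
    and cond: "(\<forall>x\<in>{0..1}. t x = ennreal (a / 2) \<longleftrightarrow> x = 0)
             \<or> (\<forall>u. s u = 0 \<longleftrightarrow> u \<in> {0..ennreal a})"
  shows "\<exists>F T. pseudo_automorphism F \<and> t_superconorm T \<and>
           (\<forall>x\<in>{0..1}. \<forall>y\<in>{0..1}. s (t x + t y) = F (T x y))"
proof -
  define c where "c = t 0"
  define K where "K = t 1"
  have G0: "\<And>x y. x\<in>{0..1} \<Longrightarrow> y\<in>{0..1} \<Longrightarrow> s (t x + t y) = 0 \<longleftrightarrow> x = 0 \<and> y = 0"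
    and G1: "\<And>x y. x\<in>{0..1} \<Longrightarrow> y\<in>{0..1} \<Longrightarrow> s (t x + t y) = 1 \<longleftrightarrow> x = 1 \<or> y = 1"
    using G unfolding grouping_function_def by auto
  have tm: "\<And>x y. x\<in>{0..1} \<Longrightarrow> y\<in>{0..1} \<Longrightarrow> x \<le> y \<Longrightarrow> t x \<le> t y"
    using t_mono by (auto simp: mono_on_def)
  have s00: "s (c + c) = 0" using G0[of 0 0] by (simp add: c_def)
  have s10: "s (K + c) = 1" using G1[of 1 0] by (simp add: c_def K_def)
  have cfin: "c \<noteq> \<infinity>"
  proof
    assume "c = \<infinity>"
    then have "K + c = c + c" by simp
    then show False using s00 s10 by (metis zero_neq_one)
  qed
  have cK: "c \<le> K" unfolding c_def K_def by (rule tm) auto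
  have ct: "\<And>x. x\<in>{0..1} \<Longrightarrow> c \<le> t x" unfolding c_def by (rule tm) auto
  have tK: "\<And>x. x\<in>{0..1} \<Longrightarrow> t x \<le> K" unfolding K_def by (rule tm) auto
  define S where "S v = {w\<in>{0..1}. t w + c = v}" for v
  define M where "M v = Sup (S v)" for v
  have fcont: "continuous_on {0..1} (\<lambda>w. t w + c)"
    by (intro continuous_on_add t_cont continuous_on_const)
  have Sne: "S v \<noteq> {}" if "c + c \<le> v" "v \<le> K + c" for v
  proof -
    have "\<exists>x\<ge>0. x \<le> 1 \<and> t x + c = v"
    proof (rule IVT'[of "\<lambda>w. t w + c" 0 v 1, OF _ _ _ fcont])
      show "t 0 + c \<le> v" using that(1) by (simp add: c_def)
      show "v \<le> t 1 + c" using that(2) by (simp add: K_def)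
    qed auto
    then obtain x where "0 \<le> x" "x \<le> 1" "t x + c = v" by blast
    then show ?thesis by (auto simp: S_def)
  qed
  have Sbdd: "bdd_above (S v)" for v by (auto simp: S_def bdd_above_def)
  have Sclosed: "closed (S v)" for v
    unfolding S_def by (rule continuous_closed_preimage_constant[OF fcont]) auto
  have MS: "M v \<in> S v" if "c + c \<le> v" "v \<le> K + c" for v
    unfolding M_def using closed_contains_Sup[OF Sne[OF that] Sbdd Sclosed] .
  have M1: "M v \<in> {0..1}" "t (M v) + c = v" if "c + c \<le> v" "v \<le> K + c" for v
    using MS[OF that] by (auto simp: S_def)
  have Mge: "x \<le> M v" if "c + c \<le> v" "v \<le> K + c" "x \<in> {0..1}" "t x + c \<le> v" for x v
  proof (rule ccontr)
    assume "\<not> x \<le> M v"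
    then have "t (M v) \<le> t x" using M1[OF that(1,2)] that(3) by (intro tm) auto
    then have "t x + c = v" using M1[OF that(1,2)] that(4)
      by (metis add_right_mono antisym)
    then have "x \<in> S v" using that(3) by (auto simp: S_def)
    then have "x \<le> M v" unfolding M_def by (rule cSup_upper[OF _ Sbdd])
    then show False using \<open>\<not> x \<le> M v\<close> by simp
  qed
  have Mmono: "M v \<le> M v'" if "c + c \<le> v" "v \<le> v'" "v' \<le> K + c" for v v'
    using Mge[of v' "M v"] M1[of v] that by auto
  define V where "V x y = min (t x + t y) (K + c)" for x y
  have Vb: "c + c \<le> V x y" "V x y \<le> K + c" if "x\<in>{0..1}" "y\<in>{0..1}" for x y
    using ct[OF that(1)] ct[OF that(2)] cK unfolding V_def
    by (auto intro: add_mono)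
  define T where "T x y = M (V x y)" for x y
  define F where "F z = s (t z + c)" for z
  have TI: "T x y \<in> {0..1}" "t (T x y) + c = V x y" if "x\<in>{0..1}" "y\<in>{0..1}" for x y
    using M1[OF Vb[OF that]] by (auto simp: T_def)
  have Vassoc: "V (T x y) z + c = min (t x + t y + t z) (K + c + c)"
    if "x\<in>{0..1}" "y\<in>{0..1}" "z\<in>{0..1}" for x y z
    unfolding V_def
    by (rule assoc_aux[OF TI(2)[OF that(1,2), unfolded V_def] ct[OF that(3)]])
  have Vassoc2: "V x (T y z) + c = min (t x + t y + t z) (K + c + c)"
    if "x\<in>{0..1}" "y\<in>{0..1}" "z\<in>{0..1}" for x y z
  proof -
    have "V x (T y z) = V (T y z) x" by (simp add: V_def add.commute)
    also have "\<dots> + c = min (t y + t z + t x) (K + c + c)"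
      using Vassoc[OF that(2,3,1)] .
    finally show ?thesis by (simp add: algebra_simps)
  qed
  have pa: "pseudo_automorphism F"
    unfolding pseudo_automorphism_def
  proof (intro conjI ballI)
    show "F ` {0..1} \<subseteq> {0..1}" using s_range by (auto simp: F_def)
    show "continuous_on {0..1} F" unfolding F_def
      by (rule continuous_on_compose2[OF s_cont fcont]) auto
    show "mono_on {0..1} F" using s_mono tm
      by (auto simp: mono_on_def F_def mono_def add_right_mono)
    fix x :: real assume x: "x \<in> {0..1}"
    show "F x = 1 \<longleftrightarrow> x = 1" using G1[OF x, of 0] by (simp add: F_def c_def)
    show "F x = 0 \<longleftrightarrow> x = 0" using G0[OF x, of 0] by (simp add: F_def c_def)
  qed
  have ts: "t_superconorm T"
    unfolding t_superconorm_def
  proof (intro conjI ballI impI)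
    fix x y :: real assume x: "x\<in>{0..1}" and y: "y\<in>{0..1}"
    show "T x y \<in> {0..1}" using TI[OF x y] by simp
    show "T x y = T y x" by (simp add: T_def V_def add.commute)
    have "x \<le> T x y" unfolding T_def
      using Mge[OF Vb[OF x y] x] ct[OF y] tK[OF x]
      by (auto simp: V_def add_left_mono)
    moreover have "y \<le> T x y" unfolding T_def
      using Mge[OF Vb[OF x y] y] ct[OF x] tK[OF y]
      by (auto simp: V_def add_right_mono add.commute)
    ultimately show "max x y \<le> T x y" by simp
  next
    fix x y z :: real assume x: "x\<in>{0..1}" and y: "y\<in>{0..1}" and z: "z\<in>{0..1}"
    have "V (T x y) z + c = V x (T y z) + c"
      using Vassoc[OF x y z] Vassoc2[OF x y z] by simp
    then have "V (T x y) z = V x (T y z)" using cfin by simp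
    then show "T (T x y) z = T x (T y z)" by (simp add: T_def)
  next
    fix x x' y :: real assume x: "x\<in>{0..1}" and x': "x'\<in>{0..1}" and y: "y\<in>{0..1}" and "x \<le> x'"
    then have "V x y \<le> V x' y" using tm[OF x x'] unfolding V_def by (intro min.mono add_right_mono) auto
    then show "T x y \<le> T x' y" unfolding T_def using Mmono Vb[OF x y] Vb[OF x' y] by auto
  next
    fix x y y' :: real assume x: "x\<in>{0..1}" and y: "y\<in>{0..1}" and y': "y'\<in>{0..1}" and "y \<le> y'"
    then have "V x y \<le> V x y'" using tm[OF y y'] unfolding V_def by (intro min.mono add_left_mono) auto
    then show "T x y \<le> T x y'" unfolding T_def using Mmono Vb[OF x y] Vb[OF x y'] by auto
  qed
  have eq: "s (t x + t y) = F (T x y)" if x: "x\<in>{0..1}" and y: "y\<in>{0..1}" for x y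
  proof (cases "t x + t y \<le> K + c")
    case True
    then show ?thesis using TI(2)[OF x y] by (simp add: F_def V_def)
  next
    case False
    then have "s (K + c) \<le> s (t x + t y)" using s_mono by (auto simp: mono_def)
    then have "s (t x + t y) = 1" using s10 s_range by (metis atLeastAtMost_iff antisym)
    moreover have "t (T x y) + c = K + c" using TI(2)[OF x y] False by (simp add: V_def)
    then have "F (T x y) = 1" using s10 by (simp only: F_def)
    ultimately show ?thesis by simp
  qed
  show ?thesis using pa ts eq by blast
qed

end
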